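(* Let $n\ge2$. For any sign string $\sigma$, the closure of $L^n_\sigma$ in $\mathbb{R}^n$ satisfies $\overline{L^n_\sigma}=L^n_\sigma\cup\bigcup_{|\tau|>|\sigma|}L^n_\tau$, the union over sign strings $\tau$. In particular, for $m\ge2$, $\overline{L^n_{\sigma^m}}\cap\overline{L^n_{-\sigma^m}}=\bigcup_{|\tau|>m}L^n_\tau$.
   Context: Write $[n]=\{1,\dots,n\}$ and identify the signs $+,-$ with $+1,-1$. For $m\ge2$, $\sigma^m(j)=(-1)^j$ and $(-\sigma^m)(j)=(-1)^{j+1}$ for $j\in[m]$. A sign string is a function $\pm\sigma^m$, $m\ge2$, of length $|\sigma|=m$. An interval in $[n]$ is a set of consecutive integers; $J<J'$ means every element of $J$ is smaller than every element of $J'$. For $x\in\mathbb{R}^n$ let $t(x)=\min\{x_k-x_{k'}: k\text{ odd},\ k'\text{ even}\}$; $x$ is level if $t(x)=0$, and then $e(x)$ is the unique real with $x_k=e(x)=x_{k'}$ for some odd $k$ and even $k'$. A level point $x$ is of type $\sigma$ if there exist nonempty intervals $J_1<\dots<J_{|\sigma|}$ covering $[n]$ such that each $J_j$ contains some $k$ with $x_k=e(x)$, and $(-1)^k=\sigma(j)$ for all $k\in J_j$ with $x_k=e(x)$. $L^n_\sigma$ is the set of level points of type $\sigma$ in $\mathbb{R}^n$. *)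

theory Defs
  imports "HOL-Analysis.Analysis"
begin

text \<open>Points of R^n are represented as functions x :: nat => real vanishing
outside [n] = {1..n}; the ambient space nat => real carries the product
topology (HOL-Analysis Function_Topology), in which Rn n is a closed subspace
homeomorphic to Euclidean R^n, so closure agrees with closure in R^n.\<close>

definition Rn :: "nat \<Rightarrow> (nat \<Rightarrow> real) set" where
  "Rn n = {x. \<forall>k. k \<notin> {1..n} \<longrightarrow> x k = 0}"

text \<open>Sign string s * sigma^m, with s in {1,-1}: j |-> s * (-1)^j on [m].\<close>
definition sstr :: "int \<Rightarrow> nat \<Rightarrow> int" where
  "sstr s j = s * (-1) ^ j"

definition tval :: "nat \<Rightarrow> (nat \<Rightarrow> real) \<Rightarrow> real" where
  "tval n x = Min {x k - x k' | k k'. k \<in> {1..n} \<and> odd k \<and> k' \<in> {1..n} \<and> even k'}"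

definition level :: "nat \<Rightarrow> (nat \<Rightarrow> real) \<Rightarrow> bool" where
  "level n x \<longleftrightarrow> tval n x = 0"

definition eval_level :: "nat \<Rightarrow> (nat \<Rightarrow> real) \<Rightarrow> real" where
  "eval_level n x = (THE e. \<exists>k k'. k \<in> {1..n} \<and> odd k \<and> k' \<in> {1..n} \<and> even k' \<and>
                           x k = e \<and> x k' = e)"

definition is_interval_nat :: "nat set \<Rightarrow> bool" where
  "is_interval_nat J \<longleftrightarrow> (\<forall>a\<in>J. \<forall>b\<in>J. \<forall>c. a \<le> c \<and> c \<le> b \<longrightarrow> c \<in> J)"

definition of_type :: "nat \<Rightarrow> int \<Rightarrow> nat \<Rightarrow> (nat \<Rightarrow> real) \<Rightarrow> bool" where
  "of_type n s m x \<longleftrightarrow>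
     (\<exists>J :: nat \<Rightarrow> nat set.
        (\<forall>j\<in>{1..m}. J j \<noteq> {} \<and> is_interval_nat (J j)) \<and>
        (\<forall>j\<in>{1..m}. \<forall>j'\<in>{1..m}. j < j' \<longrightarrow> (\<forall>a\<in>J j. \<forall>b\<in>J j'. a < b)) \<and>
        (\<Union>j\<in>{1..m}. J j) = {1..n} \<and>
        (\<forall>j\<in>{1..m}. (\<exists>k\<in>J j. x k = eval_level n x) \<and>
                     (\<forall>k\<in>J j. x k = eval_level n x \<longrightarrow> (-1::int) ^ k = sstr s j)))"

text \<open>L^n_sigma for sigma = s * sigma^m (s in {1,-1}, m >= 2).\<close>
definition Lset :: "nat \<Rightarrow> int \<Rightarrow> nat \<Rightarrow> (nat \<Rightarrow> real) set" where
  "Lset n s m = {x \<in> Rn n. level n x \<and> of_type n s m x}"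

end

theory Submission
  imports Defs
begin


definition covers :: "nat \<Rightarrow> nat \<Rightarrow> (nat \<Rightarrow> nat set) \<Rightarrow> bool" where
 "covers n m J \<longleftrightarrow> (\<forall>j\<in>{1..m}. J j \<noteq> {} \<and> is_interval_nat (J j)) \<and>
        (\<forall>j\<in>{1..m}. \<forall>j'\<in>{1..m}. j < j' \<longrightarrow> (\<forall>a\<in>J j. \<forall>b\<in>J j'. a < b)) \<and>
        (\<Union>j\<in>{1..m}. J j) = {1..n}"

definition typeT :: "nat \<Rightarrow> int \<Rightarrow> nat \<Rightarrow> nat set \<Rightarrow> bool" where
 "typeT n s m T \<longleftrightarrow> (\<exists>J. covers n m J \<and>
     (\<forall>j\<in>{1..m}. (\<exists>k\<in>J j. k \<in> T) \<and> (\<forall>k\<in>J j. k \<in> T \<longrightarrow> (-1::int) ^ k = sstr s j)))"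

lemma of_type_typeT: "of_type n s m x \<longleftrightarrow> typeT n s m {k. x k = eval_level n x}"
  unfolding of_type_def typeT_def covers_def by simp

lemma covers_sub: "covers n m J \<Longrightarrow> j \<in> {1..m} \<Longrightarrow> J j \<subseteq> {1..n}"
  unfolding covers_def by blast

lemma typeT_restrict: "typeT n s m T \<longleftrightarrow> typeT n s m (T \<inter> {1..n})"
proof -
  have "\<And>J j. covers n m J \<Longrightarrow> j \<in> {1..m} \<Longrightarrow> k \<in> J j \<Longrightarrow> (k \<in> T \<longleftrightarrow> k \<in> T \<inter> {1..n})" for k
    using covers_sub by blast
  then show ?thesis unfolding typeT_def by (metis (no_types, lifting))
qed

lemma sstr_Suc: "sstr s (Suc j) = - sstr s j"
  unfolding sstr_def by simp

lemma sstr_pm: "s \<in> {1,-1} \<Longrightarrow> sstr s j \<in> {1,-1}"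
  unfolding sstr_def by (auto simp: minus_one_power_iff)

lemma covers_last: assumes "covers n m J" "m \<ge> 1" "n \<ge> 1" shows "n \<in> J m"
proof -
  have "n \<in> (\<Union>j\<in>{1..m}. J j)" using assms(1,3) unfolding covers_def by auto
  then obtain j where j: "j \<in> {1..m}" "n \<in> J j" by blast
  show ?thesis
  proof (cases "j = m")
    case False
    then have "j < m" using j by auto
    have "J m \<noteq> {}" using assms(1,2) unfolding covers_def by auto
    then obtain b where "b \<in> J m" by blast
    moreover have "b \<le> n" using covers_sub[OF assms(1), of m] assms(2) \<open>b \<in> J m\<close> by auto
    ultimately show ?thesis using assms(1,2) j \<open>j < m\<close> unfolding covers_def by force
  qed (use j in auto)
qed

lemma sstr_ne: "s \<in> {1,-1} \<Longrightarrow> sstr s j \<noteq> sstr s (Suc j)"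
  using sstr_pm[of s j] by (auto simp: sstr_Suc)

lemma sstr_other: "s \<in> {1,-1} \<Longrightarrow> (c::int) \<in> {1,-1} \<Longrightarrow> c \<noteq> sstr s j \<Longrightarrow> c = sstr s (Suc j)"
  using sstr_pm[of s j] by (auto simp: sstr_Suc)


lemma covers_base: "covers (Suc n) 1 (\<lambda>j. {1..Suc n})"
  unfolding covers_def is_interval_nat_def by auto

lemma covers_new: assumes cov: "covers n m J" shows "covers (Suc n) (Suc m) (J(Suc m := {Suc n}))"
proof -
  define J2 where "J2 = J(Suc m := {Suc n})"
  have J2j: "\<And>j. j \<in> {1..m} \<Longrightarrow> J2 j = J j" unfolding J2_def by auto
  have Jsub: "\<And>j. j \<in> {1..m} \<Longrightarrow> J j \<subseteq> {1..n}" using covers_sub[OF cov] .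
  have "covers (Suc n) (Suc m) J2"
    unfolding covers_def
  proof (intro conjI ballI impI)
    fix j assume j: "j \<in> {1..Suc m}"
    show "J2 j \<noteq> {}"
    proof (cases "j = Suc m")
      case False
      then have "J2 j = J j" "j \<in> {1..m}" using j unfolding J2_def by auto
      then show ?thesis using cov unfolding covers_def by auto
    qed (simp add: J2_def)
    show "is_interval_nat (J2 j)"
    proof (cases "j = Suc m")
      case True
      then show ?thesis unfolding J2_def is_interval_nat_def by simp
    next
      case False
      then have "J2 j = J j" "j \<in> {1..m}" using j unfolding J2_def by auto
      then show ?thesis using cov unfolding covers_def by auto
    qed
  next
    fix j j' a b assume j: "j \<in> {1..Suc m}" and j': "j' \<in> {1..Suc m}" and jj: "j < j'"
      and a: "a \<in> J2 j" and b: "b \<in> J2 j'"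
    have jm: "j \<in> {1..m}" using jj j j' by auto
    then have aJ: "a \<in> J j" using a J2j by auto
    then have an: "a \<le> n" using Jsub[OF jm] by auto
    show "a < b"
    proof (cases "j' = Suc m")
      case True
      then show ?thesis using b an unfolding J2_def by auto
    next
      case False
      then have "j' \<in> {1..m}" using j' by auto
      then have "b \<in> J j'" using b J2j by auto
      then show ?thesis using cov jm \<open>j' \<in> {1..m}\<close> jj aJ unfolding covers_def by blast
    qed
  next
    have "(\<Union>j\<in>{1..Suc m}. J2 j) = (\<Union>j\<in>{1..m}. J2 j) \<union> J2 (Suc m)"
      by (auto simp: atLeastAtMostSuc_conv)
    also have "\<dots> = (\<Union>j\<in>{1..m}. J j) \<union> {Suc n}" using J2j unfolding J2_def by auto
    finally show "(\<Union>j\<in>{1..Suc m}. J2 j) = {1..Suc n}" using cov unfolding covers_def by auto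
  qed
  then show ?thesis unfolding J2_def .
qed


lemma covers_same: assumes cov: "covers n m J" and m: "m \<ge> 1" and n1: "n \<ge> 1"
  shows "covers (Suc n) m (J(m := J m \<union> {Suc n}))"
proof -
  define J2 where "J2 = J(m := J m \<union> {Suc n})"
  have nJ: "n \<in> J m" using covers_last[OF cov m n1] .
  have Jsub: "\<And>j. j \<in> {1..m} \<Longrightarrow> J j \<subseteq> {1..n}" using covers_sub[OF cov] .
  have J2m: "J2 m = J m \<union> {Suc n}" unfolding J2_def by simp
  have J2j: "\<And>j. j \<noteq> m \<Longrightarrow> J2 j = J j" unfolding J2_def by simp
  have "covers (Suc n) m J2"
    unfolding covers_def
  proof (intro conjI ballI impI)
    fix j assume j: "j \<in> {1..m}"
    show "J2 j \<noteq> {}"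
    proof (cases "j = m")
      case False
      then show ?thesis using cov j J2j[OF False] unfolding covers_def by auto
    qed (simp add: J2m)
    show "is_interval_nat (J2 j)"
    proof (cases "j = m")
      case True
      have iv: "is_interval_nat (J m)" using cov j unfolding covers_def by auto
      show ?thesis unfolding is_interval_nat_def True J2m
      proof (intro ballI allI impI)
        fix a b c assume a: "a \<in> J m \<union> {Suc n}" and b: "b \<in> J m \<union> {Suc n}"
          and c: "a \<le> c \<and> c \<le> b"
        have a': "a \<in> J m \<or> a = Suc n" using a by auto
        have b': "b \<in> J m \<or> b = Suc n" using b by auto
        have bb: "b \<le> Suc n" using b' Jsub[of m] m by auto
        show "c \<in> J m \<union> {Suc n}"
        proof (cases "c = Suc n")
          case False
          then have cn: "c \<le> n" using c bb by auto
          have aJ: "a \<in> J m" using a' c False cn by auto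
          have "c \<in> J m" using iv aJ nJ c cn unfolding is_interval_nat_def by blast
          then show ?thesis by simp
        qed simp
      qed
    next
      case False
      then show ?thesis using cov j J2j[OF False] unfolding covers_def by auto
    qed
  next
    fix j j' a b assume j: "j \<in> {1..m}" and j': "j' \<in> {1..m}" and jj: "j < j'"
      and a: "a \<in> J2 j" and b: "b \<in> J2 j'"
    have "j \<noteq> m" using jj j' by auto
    then have aJ: "a \<in> J j" using a J2j by auto
    show "a < b"
    proof (cases "b = Suc n")
      case True
      then show ?thesis using Jsub[OF j] aJ by auto
    next
      case False
      then have "b \<in> J j'" using b J2j J2m by (cases "j' = m") auto
      then show ?thesis using cov j j' jj aJ unfolding covers_def by blast
    qed
  next
    have "(\<Union>j\<in>{1..m}. J2 j) = (\<Union>j\<in>{1..m}. J j) \<union> {Suc n}"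
    proof
      show "(\<Union>j\<in>{1..m}. J2 j) \<subseteq> (\<Union>j\<in>{1..m}. J j) \<union> {Suc n}"
        using J2j J2m by (smt (verit) UN_iff Un_iff subsetI)
      show "(\<Union>j\<in>{1..m}. J j) \<union> {Suc n} \<subseteq> (\<Union>j\<in>{1..m}. J2 j)"
        using J2j J2m m by (smt (verit) UN_iff Un_iff atLeastAtMost_iff insert_iff le_refl subsetI)
    qed
    then show "(\<Union>j\<in>{1..m}. J2 j) = {1..Suc n}" using cov unfolding covers_def by auto
  qed
  then show ?thesis unfolding J2_def .
qed


lemma typeT_exists:
  "T \<subseteq> {1..n} \<Longrightarrow> T \<noteq> {} \<Longrightarrow> \<exists>s m. s \<in> {1,-1} \<and> m \<ge> 1 \<and> typeT n s m T"
proof (induction n arbitrary: T)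
  case 0
  then show ?case by auto
next
  case (Suc n)
  define sg :: int where "sg = (-1) ^ Suc n"
  have sgpm: "sg \<in> {1,-1}" unfolding sg_def by (simp add: minus_one_power_iff)
  show ?case
  proof (cases "T - {Suc n} = {}")
    case True
    then have T: "T = {Suc n}" using Suc.prems by auto
    define s where "s = - sg"
    have ss: "sstr s 1 = sg" unfolding s_def sstr_def by simp
    have "\<forall>j\<in>{1..1}. (\<exists>k\<in>{1..Suc n}. k \<in> T) \<and> (\<forall>k\<in>{1..Suc n}. k \<in> T \<longrightarrow> (-1::int) ^ k = sstr s j)"
      using ss unfolding T sg_def by simp
    then have "typeT (Suc n) s 1 T" unfolding typeT_def using covers_base by blast
    moreover have "s \<in> {1,-1}" using sgpm s_def by auto
    ultimately show ?thesis by blast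
  next
    case False
    have sub: "T - {Suc n} \<subseteq> {1..n}" using Suc.prems by auto
    from Suc.IH[OF sub False] obtain s m where s: "s \<in> {1,-1}" and m: "m \<ge> 1"
      and ty: "typeT n s m (T - {Suc n})" by blast
    from ty obtain J where cov: "covers n m J"
      and JT: "\<forall>j\<in>{1..m}. (\<exists>k\<in>J j. k \<in> T - {Suc n}) \<and> (\<forall>k\<in>J j. k \<in> T - {Suc n} \<longrightarrow> (-1::int) ^ k = sstr s j)"
      unfolding typeT_def by blast
    have n1: "n \<ge> 1" using sub False by auto
    have Jsub: "\<And>j. j \<in> {1..m} \<Longrightarrow> J j \<subseteq> {1..n}" using covers_sub[OF cov] .
    have JTj: "\<And>j k. j \<in> {1..m} \<Longrightarrow> k \<in> J j \<Longrightarrow> k \<in> T \<Longrightarrow> (-1::int) ^ k = sstr s j"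
    proof -
      fix j k assume j: "j \<in> {1..m}" and k: "k \<in> J j" "k \<in> T"
      have "k \<in> T - {Suc n}" using k Jsub[OF j] by auto
      then show "(-1::int) ^ k = sstr s j" using JT j k(1) by blast
    qed
    have JTe: "\<And>j. j \<in> {1..m} \<Longrightarrow> \<exists>k\<in>J j. k \<in> T" using JT by blast
    show ?thesis
    proof (cases "Suc n \<in> T \<longrightarrow> sg = sstr s m")
      case True
      define J2 where "J2 = J(m := J m \<union> {Suc n})"
      have cov2: "covers (Suc n) m J2" unfolding J2_def by (rule covers_same[OF cov m n1])
      have "\<forall>j\<in>{1..m}. (\<exists>k\<in>J2 j. k \<in> T) \<and> (\<forall>k\<in>J2 j. k \<in> T \<longrightarrow> (-1::int) ^ k = sstr s j)"
      proof (intro ballI conjI impI)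
        fix j assume j: "j \<in> {1..m}"
        have "J j \<subseteq> J2 j" unfolding J2_def by auto
        then show "\<exists>k\<in>J2 j. k \<in> T" using JTe[OF j] by blast
        fix k assume k: "k \<in> J2 j" "k \<in> T"
        show "(-1::int) ^ k = sstr s j"
        proof (cases "k = Suc n")
          case True
          have "j = m"
          proof (rule ccontr)
            assume "j \<noteq> m"
            then have "J2 j = J j" by (simp add: J2_def)
            then show False using k Jsub[OF j] True by auto
          qed
          then show ?thesis using \<open>Suc n \<in> T \<longrightarrow> sg = sstr s m\<close> k True by (simp add: sg_def)
        next
          case False
          have "k \<in> J j" using k False unfolding J2_def by (cases "j = m") auto
          then show ?thesis using JTj j k by blast
        qed
      qed
      then have "typeT (Suc n) s m T" unfolding typeT_def using cov2 by blast
      then show ?thesis using s m by blast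
    next
      case False
      then have inT: "Suc n \<in> T" and sgne: "sg \<noteq> sstr s m" by auto
      have sgS: "sg = sstr s (Suc m)" using sstr_other[OF s sgpm sgne] .
      define J2 where "J2 = J(Suc m := {Suc n})"
      have cov2: "covers (Suc n) (Suc m) J2" unfolding J2_def by (rule covers_new[OF cov])
      have "\<forall>j\<in>{1..Suc m}. (\<exists>k\<in>J2 j. k \<in> T) \<and> (\<forall>k\<in>J2 j. k \<in> T \<longrightarrow> (-1::int) ^ k = sstr s j)"
      proof (intro ballI conjI impI)
        fix j assume j: "j \<in> {1..Suc m}"
        show "\<exists>k\<in>J2 j. k \<in> T"
        proof (cases "j = Suc m")
          case True
          then show ?thesis using inT by (simp add: J2_def)
        next
          case False
          then have "j \<in> {1..m}" "J2 j = J j" using j by (auto simp: J2_def)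
          then show ?thesis using JTe by auto
        qed
        fix k assume k: "k \<in> J2 j" "k \<in> T"
        show "(-1::int) ^ k = sstr s j"
        proof (cases "j = Suc m")
          case True
          then have "J2 j = {Suc n}" by (simp add: J2_def)
          then have "k = Suc n" using k by simp
          then have "(-1::int) ^ k = sg" by (simp add: sg_def)
          then show ?thesis using sgS True by simp
        next
          case False
          then have "j \<in> {1..m}" "J2 j = J j" using j by (auto simp: J2_def)
          then show ?thesis using JTj[of j k] k by simp
        qed
      qed
      then have "typeT (Suc n) s (Suc m) T" unfolding typeT_def using cov2 by blast
      moreover have "Suc m \<ge> 1" by simp
      ultimately show ?thesis using s by blast
    qed
  qed
qed


lemma covers_ord: "covers n m J \<Longrightarrow> j \<in> {1..m} \<Longrightarrow> j' \<in> {1..m} \<Longrightarrow> j < j' \<Longrightarrow> a \<in> J j \<Longrightarrow> b \<in> J j' \<Longrightarrow> a < b"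
  unfolding covers_def by blast

lemma typeT_mono:
  assumes t1: "typeT n s m T" and t2: "typeT n s' m' T'" and sub: "\<forall>k\<in>{1..n}. k \<in> T \<longrightarrow> k \<in> T'"
    and m: "m \<ge> 1" and s: "s \<in> {1,-1}"
  shows "m < m' \<or> (m = m' \<and> s = s')"
proof -
  obtain J where cov: "covers n m J" and JT: "\<forall>j\<in>{1..m}. (\<exists>k\<in>J j. k \<in> T) \<and> (\<forall>k\<in>J j. k \<in> T \<longrightarrow> (-1::int) ^ k = sstr s j)"
    using t1 unfolding typeT_def by blast
  obtain J' where cov': "covers n m' J'" and JT': "\<forall>j\<in>{1..m'}. (\<exists>k\<in>J' j. k \<in> T') \<and> (\<forall>k\<in>J' j. k \<in> T' \<longrightarrow> (-1::int) ^ k = sstr s' j)"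
    using t2 unfolding typeT_def by blast
  have "\<forall>j\<in>{1..m}. \<exists>k. k \<in> J j \<and> k \<in> T" using JT by blast
  then obtain t where t: "\<forall>j\<in>{1..m}. t j \<in> J j \<and> t j \<in> T" by (metis bchoice)
  have tn: "\<And>j. j \<in> {1..m} \<Longrightarrow> t j \<in> {1..n}" using t covers_sub[OF cov] by blast
  have tT': "\<And>j. j \<in> {1..m} \<Longrightarrow> t j \<in> T'" using t tn sub by blast
  have sg: "\<And>j. j \<in> {1..m} \<Longrightarrow> (-1::int) ^ t j = sstr s j" using t JT by blast
  have "\<forall>j\<in>{1..m}. \<exists>i. i \<in> {1..m'} \<and> t j \<in> J' i"
  proof
    fix j assume "j \<in> {1..m}"
    then have "t j \<in> (\<Union>i\<in>{1..m'}. J' i)" using tn cov' unfolding covers_def by auto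
    then show "\<exists>i. i \<in> {1..m'} \<and> t j \<in> J' i" by blast
  qed
  then obtain ph where ph: "\<forall>j\<in>{1..m}. ph j \<in> {1..m'} \<and> t j \<in> J' (ph j)" by (metis bchoice)
  have sg': "\<And>j. j \<in> {1..m} \<Longrightarrow> (-1::int) ^ t j = sstr s' (ph j)"
  proof -
    fix j assume j: "j \<in> {1..m}"
    have "ph j \<in> {1..m'}" "t j \<in> J' (ph j)" using ph j by auto
    then show "(-1::int) ^ t j = sstr s' (ph j)" using JT' tT'[OF j] by blast
  qed
  have step: "\<And>j. 1 \<le> j \<Longrightarrow> Suc j \<le> m \<Longrightarrow> ph j < ph (Suc j)"
  proof -
    fix j assume j1: "1 \<le> j" and j2: "Suc j \<le> m"
    have ja: "j \<in> {1..m}" and jb: "Suc j \<in> {1..m}" using j1 j2 by auto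
    have "t j \<in> J j" "t (Suc j) \<in> J (Suc j)" using t ja jb by auto
    then have tlt: "t j < t (Suc j)" using covers_ord[OF cov ja jb] by simp
    show "ph j < ph (Suc j)"
    proof (rule ccontr)
      assume "\<not> ph j < ph (Suc j)"
      then consider "ph (Suc j) < ph j" | "ph (Suc j) = ph j" by linarith
      then show False
      proof cases
        case 1
        have "ph j \<in> {1..m'}" "t j \<in> J' (ph j)" "ph (Suc j) \<in> {1..m'}" "t (Suc j) \<in> J' (ph (Suc j))"
          using ph ja jb by auto
        then have "t (Suc j) < t j" using covers_ord[OF cov'] 1 by blast
        then show False using tlt by simp
      next
        case 2
        have "sstr s j = sstr s (Suc j)" using sg[OF ja] sg[OF jb] sg'[OF ja] sg'[OF jb] 2 by simp
        then show False using sstr_ne[OF s] by blast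
      qed
    qed
  qed
  have grow: "\<And>j. 1 \<le> j \<Longrightarrow> j \<le> m \<Longrightarrow> ph 1 + (j - 1) \<le> ph j"
  proof -
    fix j show "1 \<le> j \<Longrightarrow> j \<le> m \<Longrightarrow> ph 1 + (j - 1) \<le> ph j"
    proof (induction j)
      case 0
      then show ?case by simp
    next
      case (Suc j)
      show ?case
      proof (cases "j = 0")
        case False
        then have "ph 1 + (j - 1) \<le> ph j" using Suc by simp
        moreover have "ph j < ph (Suc j)" using step[of j] False Suc.prems by simp
        ultimately show ?thesis using False by simp
      qed simp
    qed
  qed
  have m1: "1 \<in> {1..m}" and mm: "m \<in> {1..m}" using m by auto
  have "ph 1 + (m - 1) \<le> ph m" using grow[of m] m by simp
  moreover have "ph m \<le> m'" "ph 1 \<ge> 1" using ph m1 mm by auto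
  ultimately have le: "m \<le> m'" and eq: "m = m' \<Longrightarrow> ph 1 = 1" by linarith+
  show ?thesis
  proof (cases "m = m'")
    case True
    then have "sstr s 1 = sstr s' 1" using sg[OF m1] sg'[OF m1] eq by simp
    then have "s = s'" unfolding sstr_def by simp
    then show ?thesis using True by simp
  qed (use le in simp)
qed


lemma typeT_sub:
  assumes t2: "typeT n s' m' T'" and s: "s \<in> {1,-1}" and s': "s' \<in> {1,-1}"
    and m: "1 \<le> m" and mm: "m < m'"
  shows "\<exists>T. T \<subseteq> T' \<inter> {1..n} \<and> typeT n s m T"
proof -
  obtain J' where cov': "covers n m' J'" and JT': "\<forall>j\<in>{1..m'}. (\<exists>k\<in>J' j. k \<in> T') \<and> (\<forall>k\<in>J' j. k \<in> T' \<longrightarrow> (-1::int) ^ k = sstr s' j)"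
    using t2 unfolding typeT_def by blast
  define idx where "idx k = (THE i. i \<in> {1..m'} \<and> k \<in> J' i)" for k
  have idx_uniq: "\<And>i k. i \<in> {1..m'} \<Longrightarrow> k \<in> J' i \<Longrightarrow> idx k = i"
  proof -
    fix i k assume i: "i \<in> {1..m'}" and k: "k \<in> J' i"
    show "idx k = i" unfolding idx_def
    proof (rule the_equality)
      show "i \<in> {1..m'} \<and> k \<in> J' i" using i k by simp
    next
      fix i2 assume i2: "i2 \<in> {1..m'} \<and> k \<in> J' i2"
      show "i2 = i"
      proof (rule ccontr)
        assume "i2 \<noteq> i"
        then consider "i2 < i" | "i < i2" by linarith
        then show False
        proof cases
          case 1 then show False using covers_ord[OF cov', of i2 i k k] i i2 k by simp
        next
          case 2 then show False using covers_ord[OF cov', of i i2 k k] i i2 k by simp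
        qed
      qed
    qed
  qed
  have idx_in: "\<And>k. k \<in> {1..n} \<Longrightarrow> idx k \<in> {1..m'} \<and> k \<in> J' (idx k)"
  proof -
    fix k assume "k \<in> {1..n}"
    then have "k \<in> (\<Union>i\<in>{1..m'}. J' i)" using cov' unfolding covers_def by auto
    then obtain i where "i \<in> {1..m'}" "k \<in> J' i" by blast
    then show "idx k \<in> {1..m'} \<and> k \<in> J' (idx k)" using idx_uniq by simp
  qed
  have idx_mono: "\<And>a b. a \<in> {1..n} \<Longrightarrow> b \<in> {1..n} \<Longrightarrow> a \<le> b \<Longrightarrow> idx a \<le> idx b"
  proof (rule ccontr)
    fix a b assume a: "a \<in> {1..n}" and b: "b \<in> {1..n}" and ab: "a \<le> b" and "\<not> idx a \<le> idx b"
    then have "idx b < idx a" by simp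
    then have "b < a" using covers_ord[OF cov', of "idx b" "idx a" b a] idx_in[OF a] idx_in[OF b] by simp
    then show False using ab by simp
  qed
  define i0 :: nat where "i0 = (if sstr s 1 = sstr s' 1 then 0 else 1)"
  have i0le: "i0 \<le> 1" unfolding i0_def by simp
  have shift: "\<And>j. sstr s j = sstr s' (j + i0)"
  proof -
    fix j
    show "sstr s j = sstr s' (j + i0)"
    proof (cases "sstr s 1 = sstr s' 1")
      case True
      then have "s = s'" unfolding sstr_def by simp
      then show ?thesis using True unfolding i0_def by simp
    next
      case False
      then have "s = - s'" using s s' unfolding sstr_def by auto
      then show ?thesis using False unfolding i0_def sstr_def by simp
    qed
  qed
  define g where "g j' = max 1 (min m (j' - i0))" for j'
  have g_mono: "\<And>a b. a \<le> b \<Longrightarrow> g a \<le> g b" unfolding g_def by simp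
  have g_shift: "\<And>j. j \<in> {1..m} \<Longrightarrow> g (j + i0) = j" unfolding g_def by simp
  have g_range: "\<And>j'. g j' \<in> {1..m}" unfolding g_def using m by simp
  define J where "J j = {k \<in> {1..n}. g (idx k) = j}" for j
  define T where "T = {k \<in> T'. k \<in> {1..n} \<and> i0 + 1 \<le> idx k \<and> idx k \<le> i0 + m}"
  have jm': "\<And>j. j \<in> {1..m} \<Longrightarrow> j + i0 \<in> {1..m'}" using mm i0le by auto
  have JJ': "\<And>j. j \<in> {1..m} \<Longrightarrow> J' (j + i0) \<subseteq> J j"
  proof
    fix j k assume j: "j \<in> {1..m}" and k: "k \<in> J' (j + i0)"
    have kn: "k \<in> {1..n}" using covers_sub[OF cov' jm'[OF j]] k by auto
    have "idx k = j + i0" using idx_uniq[OF jm'[OF j] k] .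
    then show "k \<in> J j" unfolding J_def using kn g_shift[OF j] by simp
  qed
  have cov: "covers n m J" unfolding covers_def
  proof (intro conjI ballI impI)
    fix j assume j: "j \<in> {1..m}"
    have "J' (j + i0) \<noteq> {}" using cov' jm'[OF j] unfolding covers_def by blast
    then show "J j \<noteq> {}" using JJ'[OF j] by blast
    show "is_interval_nat (J j)" unfolding is_interval_nat_def
    proof (intro ballI allI impI)
      fix a b c assume a: "a \<in> J j" and b: "b \<in> J j" and c: "a \<le> c \<and> c \<le> b"
      have an: "a \<in> {1..n}" and bn: "b \<in> {1..n}" using a b unfolding J_def by auto
      then have cn: "c \<in> {1..n}" using c by auto
      have "g (idx a) \<le> g (idx c)" "g (idx c) \<le> g (idx b)"
        using g_mono idx_mono an bn cn c by auto
      moreover have "g (idx a) = j" "g (idx b) = j" using a b unfolding J_def by auto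
      ultimately show "c \<in> J j" unfolding J_def using cn by simp
    qed
  next
    fix j j' a b assume j: "j \<in> {1..m}" and j': "j' \<in> {1..m}" and jj: "j < j'" and a: "a \<in> J j" and b: "b \<in> J j'"
    have an: "a \<in> {1..n}" and bn: "b \<in> {1..n}" and ga: "g (idx a) = j" and gb: "g (idx b) = j'"
      using a b unfolding J_def by auto
    show "a < b"
    proof (rule ccontr)
      assume "\<not> a < b"
      then have "g (idx b) \<le> g (idx a)" using g_mono idx_mono an bn by simp
      then show False using ga gb jj by simp
    qed
  next
    show "(\<Union>j\<in>{1..m}. J j) = {1..n}"
    proof
      show "(\<Union>j\<in>{1..m}. J j) \<subseteq> {1..n}" unfolding J_def by auto
      show "{1..n} \<subseteq> (\<Union>j\<in>{1..m}. J j)"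
      proof
        fix k assume "k \<in> {1..n}"
        then have "k \<in> J (g (idx k))" unfolding J_def by simp
        then show "k \<in> (\<Union>j\<in>{1..m}. J j)" using g_range by blast
      qed
    qed
  qed
  have "\<forall>j\<in>{1..m}. (\<exists>k\<in>J j. k \<in> T) \<and> (\<forall>k\<in>J j. k \<in> T \<longrightarrow> (-1::int) ^ k = sstr s j)"
  proof (intro ballI conjI impI)
    fix j assume j: "j \<in> {1..m}"
    obtain k where k: "k \<in> J' (j + i0)" "k \<in> T'" using JT' jm'[OF j] by blast
    have kn: "k \<in> {1..n}" using covers_sub[OF cov' jm'[OF j]] k by auto
    have "idx k = j + i0" using idx_uniq[OF jm'[OF j] k(1)] .
    then have "k \<in> T" unfolding T_def using k kn j by auto
    then show "\<exists>k\<in>J j. k \<in> T" using JJ'[OF j] k(1) by blast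
    fix k assume kJ: "k \<in> J j" and kT: "k \<in> T"
    have kn: "k \<in> {1..n}" and gk: "g (idx k) = j" using kJ unfolding J_def by auto
    have r: "i0 + 1 \<le> idx k" "idx k \<le> i0 + m" and kT': "k \<in> T'" using kT unfolding T_def by auto
    have "g (idx k) = idx k - i0" unfolding g_def using r by simp
    then have ik: "idx k = j + i0" using gk r by simp
    have "k \<in> J' (j + i0)" using idx_in[OF kn] ik by simp
    then have "(-1::int) ^ k = sstr s' (j + i0)" using JT' jm'[OF j] kT' by blast
    then show "(-1::int) ^ k = sstr s j" using shift by simp
  qed
  then have "typeT n s m T" unfolding typeT_def using cov by blast
  moreover have "T \<subseteq> T' \<inter> {1..n}" unfolding T_def by auto
  ultimately show ?thesis by blast
qed

lemma typeT_two:
  assumes t: "typeT n s m T" and m: "m \<ge> 2" and s: "s \<in> {1,-1}"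
  shows "\<exists>k\<in>T \<inter> {1..n}. \<exists>k'\<in>T \<inter> {1..n}. odd k \<and> even k'"
proof -
  obtain J where cov: "covers n m J" and JT: "\<forall>j\<in>{1..m}. (\<exists>k\<in>J j. k \<in> T) \<and> (\<forall>k\<in>J j. k \<in> T \<longrightarrow> (-1::int) ^ k = sstr s j)"
    using t unfolding typeT_def by blast
  have j1: "1 \<in> {1..m}" and j2: "2 \<in> {1..m}" using m by auto
  obtain a where a: "a \<in> J 1" "a \<in> T" using JT j1 by blast
  obtain b where b: "b \<in> J 2" "b \<in> T" using JT j2 by blast
  have sa: "(-1::int) ^ a = sstr s 1" using JT j1 a by blast
  have sb: "(-1::int) ^ b = sstr s 2" using JT j2 b by blast
  have an: "a \<in> {1..n}" using covers_sub[OF cov j1] a by auto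
  have bn: "b \<in> {1..n}" using covers_sub[OF cov j2] b by auto
  have "sstr s 1 \<noteq> sstr s 2" using sstr_ne[OF s, of 1] by (simp add: numeral_2_eq_2)
  then have "odd a \<noteq> odd b" using sa sb by (auto simp: minus_one_power_iff split: if_splits)
  then show ?thesis using a b an bn by (cases "odd a") auto
qed



definition lev :: "nat \<Rightarrow> (nat \<Rightarrow> real) \<Rightarrow> real \<Rightarrow> bool" where
  "lev n x e \<longleftrightarrow> (\<exists>k\<in>{1..n}. \<exists>k'\<in>{1..n}. odd k \<and> even k' \<and> x k = e \<and> x k' = e) \<and>
     (\<forall>k\<in>{1..n}. odd k \<longrightarrow> e \<le> x k) \<and> (\<forall>k\<in>{1..n}. even k \<longrightarrow> x k \<le> e)"

lemma tset_finite: fixes x :: "nat \<Rightarrow> real" and n :: nat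
  shows "finite {x k - x k' | k k'. k \<in> {1..n} \<and> odd k \<and> k' \<in> {1..n} \<and> even k'}"
proof (rule finite_subset)
  show "{x k - x k' | k k'. k \<in> {1..n} \<and> odd k \<and> k' \<in> {1..n} \<and> even k'} \<subseteq> (\<lambda>(k,k'). x k - x k') ` ({1..n} \<times> {1..n})"
    by auto
qed (intro finite_imageI finite_cartesian_product; simp)

lemma tset_ne: fixes x :: "nat \<Rightarrow> real" and n :: nat
  shows "n \<ge> 2 \<Longrightarrow> {x k - x k' | k k'. k \<in> {1..n} \<and> odd k \<and> k' \<in> {1..n} \<and> even k'} \<noteq> {}"
proof -
  assume "n \<ge> 2"
  then have "(1::nat) \<in> {1..n}" "(2::nat) \<in> {1..n}" "odd (1::nat)" "even (2::nat)" by auto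
  then have "x 1 - x 2 \<in> {x k - x k' | k k'. k \<in> {1..n} \<and> odd k \<and> k' \<in> {1..n} \<and> even k'}"
    by blast
  then show ?thesis by blast
qed

lemma lev_imp: fixes x :: "nat \<Rightarrow> real" and n :: nat
  assumes n: "n \<ge> 2" and l: "lev n x e" shows "level n x \<and> eval_level n x = e"
proof
  obtain k0 k0' where k0: "k0 \<in> {1..n}" "k0' \<in> {1..n}" "odd k0" "even k0'" "x k0 = e" "x k0' = e"
    using l unfolding lev_def by blast
  have od: "\<And>k. k \<in> {1..n} \<Longrightarrow> odd k \<Longrightarrow> e \<le> x k" and ev: "\<And>k. k \<in> {1..n} \<Longrightarrow> even k \<Longrightarrow> x k \<le> e"
    using l unfolding lev_def by auto
  show "level n x" unfolding level_def tval_def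
  proof (subst Min_eq_iff[OF tset_finite tset_ne[OF n]], intro conjI ballI)
    have "x k0 - x k0' \<in> {x k - x k' | k k'. k \<in> {1..n} \<and> odd k \<and> k' \<in> {1..n} \<and> even k'}"
      using k0 by blast
    then show "0 \<in> {x k - x k' | k k'. k \<in> {1..n} \<and> odd k \<and> k' \<in> {1..n} \<and> even k'}"
      using k0 by simp
  next
    fix a assume "a \<in> {x k - x k' | k k'. k \<in> {1..n} \<and> odd k \<and> k' \<in> {1..n} \<and> even k'}"
    then obtain k k' where a: "a = x k - x k'" "k \<in> {1..n}" "odd k" "k' \<in> {1..n}" "even k'" by blast
    have "e \<le> x k" "x k' \<le> e" using od[OF a(2,3)] ev[OF a(4,5)] .
    then show "0 \<le> a" using a(1) by simp
  qed
  show "eval_level n x = e" unfolding eval_level_def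
  proof (rule the_equality)
    show "\<exists>k k'. k \<in> {1..n} \<and> odd k \<and> k' \<in> {1..n} \<and> even k' \<and> x k = e \<and> x k' = e"
      using k0 by blast
  next
    fix e' assume "\<exists>k k'. k \<in> {1..n} \<and> odd k \<and> k' \<in> {1..n} \<and> even k' \<and> x k = e' \<and> x k' = e'"
    then obtain k k' where a: "k \<in> {1..n}" "odd k" "k' \<in> {1..n}" "even k'" "x k = e'" "x k' = e'" by blast
    have "e \<le> x k" "x k' \<le> e" using od[OF a(1,2)] ev[OF a(3,4)] .
    then show "e' = e" using a(5,6) by simp
  qed
qed

lemma level_imp: fixes x :: "nat \<Rightarrow> real" and n :: nat
  assumes n: "n \<ge> 2" and l: "level n x" shows "lev n x (eval_level n x)"
proof -
  let ?S = "{x k - x k' | k k'. k \<in> {1..n} \<and> odd k \<and> k' \<in> {1..n} \<and> even k'}"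
  have "Min ?S = 0" using l unfolding level_def tval_def .
  then have z: "0 \<in> ?S" and nn: "\<forall>a\<in>?S. 0 \<le> a"
    using Min_eq_iff[OF tset_finite tset_ne[OF n]] by auto
  obtain k0 k0' where k0: "k0 \<in> {1..n}" "odd k0" "k0' \<in> {1..n}" "even k0'" "x k0 - x k0' = 0"
    using z by auto
  have le: "\<And>k k'. k \<in> {1..n} \<Longrightarrow> odd k \<Longrightarrow> k' \<in> {1..n} \<Longrightarrow> even k' \<Longrightarrow> x k' \<le> x k"
  proof -
    fix k k' assume "k \<in> {1..n}" "odd k" "k' \<in> {1..n}" "even k'"
    then have "x k - x k' \<in> ?S" by blast
    then have "0 \<le> x k - x k'" using nn by blast
    then show "x k' \<le> x k" by simp
  qed
  have e: "x k0' = x k0" using k0(5) by simp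
  have "lev n x (x k0)" unfolding lev_def
  proof (intro conjI ballI impI)
    show "\<exists>k\<in>{1..n}. \<exists>k'\<in>{1..n}. odd k \<and> even k' \<and> x k = x k0 \<and> x k' = x k0"
      using k0 e by blast
  next
    fix k assume "k \<in> {1..n}" "odd k"
    then show "x k0 \<le> x k" using le[of k k0'] k0 e by simp
  next
    fix k assume "k \<in> {1..n}" "even k"
    then show "x k \<le> x k0" using le[of k0 k] k0 by simp
  qed
  then show ?thesis using lev_imp[OF n] by auto
qed

definition Cset :: "nat \<Rightarrow> (nat \<Rightarrow> real) set" where
  "Cset n = Rn n \<inter> (\<Inter>k\<in>{k\<in>{1..n}. odd k}. \<Inter>k'\<in>{k'\<in>{1..n}. even k'}. {x. x k' \<le> x k})
      \<inter> (\<Union>k\<in>{k\<in>{1..n}. odd k}. \<Union>k'\<in>{k'\<in>{1..n}. even k'}. {x. x k = x k'})"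

lemma closed_Cset: "closed (Cset n)"
proof -
  have "Rn n = (\<Inter>k\<in>-{1..n}. {x. x k = 0})" unfolding Rn_def by auto
  moreover have "closed (\<Inter>k\<in>-{1..n}. {x::nat\<Rightarrow>real. x k = 0})"
    by (intro closed_INT ballI closed_Collect_eq continuous_on_product_coordinates continuous_on_const)
  ultimately have c1: "closed (Rn n)" by simp
  have c2: "closed (\<Inter>k\<in>{k\<in>{1..n}. odd k}. \<Inter>k'\<in>{k'\<in>{1..n}. even k'}. {x::nat\<Rightarrow>real. x k' \<le> x k})"
    by (intro closed_INT ballI closed_Collect_le continuous_on_product_coordinates)
  have c3: "closed (\<Union>k\<in>{k\<in>{1..n}. odd k}. \<Union>k'\<in>{k'\<in>{1..n}. even k'}. {x::nat\<Rightarrow>real. x k = x k'})"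
    by (intro closed_UN ballI closed_Collect_eq continuous_on_product_coordinates finite_Collect_conjI disjI1) simp_all
  show ?thesis unfolding Cset_def by (intro closed_Int c1 c2 c3)
qed

lemma Cset_lev: "x \<in> Cset n \<Longrightarrow> x \<in> Rn n \<and> (\<exists>e. lev n x e)"
proof -
  assume x: "x \<in> Cset n"
  then obtain k k' where k: "k \<in> {1..n}" "odd k" "k' \<in> {1..n}" "even k'" "x k = x k'"
    unfolding Cset_def by blast
  have le: "\<And>a b. a \<in> {1..n} \<Longrightarrow> odd a \<Longrightarrow> b \<in> {1..n} \<Longrightarrow> even b \<Longrightarrow> x b \<le> x a"
    using x unfolding Cset_def by blast
  have "lev n x (x k)" unfolding lev_def
  proof (intro conjI ballI impI)
    show "\<exists>a\<in>{1..n}. \<exists>b\<in>{1..n}. odd a \<and> even b \<and> x a = x k \<and> x b = x k"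
      using k by metis
  next
    fix a assume "a \<in> {1..n}" "odd a"
    then show "x k \<le> x a" using le[of a k'] k by simp
  next
    fix a assume "a \<in> {1..n}" "even a"
    then show "x a \<le> x k" using le[of k a] k by simp
  qed
  then show ?thesis using x unfolding Cset_def by blast
qed

lemma Lset_C: "n \<ge> 2 \<Longrightarrow> Lset n s m \<subseteq> Cset n"
proof
  fix x assume n: "n \<ge> 2" and "x \<in> Lset n s m"
  then have r: "x \<in> Rn n" and l: "level n x" unfolding Lset_def by auto
  obtain k k' where k: "k \<in> {1..n}" "odd k" "k' \<in> {1..n}" "even k'" "x k = eval_level n x" "x k' = eval_level n x"
    and od: "\<forall>a\<in>{1..n}. odd a \<longrightarrow> eval_level n x \<le> x a" and ev: "\<forall>a\<in>{1..n}. even a \<longrightarrow> x a \<le> eval_level n x"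
    using level_imp[OF n l] unfolding lev_def by blast
  have "\<forall>a\<in>{a\<in>{1..n}. odd a}. \<forall>b\<in>{b\<in>{1..n}. even b}. x b \<le> x a"
  proof (intro ballI)
    fix a b assume "a \<in> {a\<in>{1..n}. odd a}" "b \<in> {b\<in>{1..n}. even b}"
    then have "eval_level n x \<le> x a" "x b \<le> eval_level n x" using od ev by auto
    then show "x b \<le> x a" by simp
  qed
  then have "x \<in> (\<Inter>k\<in>{k\<in>{1..n}. odd k}. \<Inter>k'\<in>{k'\<in>{1..n}. even k'}. {x. x k' \<le> x k})"
    by simp
  moreover have "x k = x k'" using k by simp
  then have "x \<in> (\<Union>k\<in>{k\<in>{1..n}. odd k}. \<Union>k'\<in>{k'\<in>{1..n}. even k'}. {x. x k = x k'})"
    using k by blast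
  ultimately show "x \<in> Cset n" using r unfolding Cset_def by blast
qed



lemma closure_sub:
  fixes n m :: nat and s :: int and y :: "nat \<Rightarrow> real"
  assumes n: "n \<ge> 2" and m: "m \<ge> 1" and s: "s \<in> {1,-1}" and y: "y \<in> closure (Lset n s m)"
  shows "y \<in> Lset n s m \<or> (\<exists>s' m'. s' \<in> {1,-1} \<and> m' > m \<and> y \<in> Lset n s' m')"
proof -
  have yC: "y \<in> Cset n" using closure_minimal[OF Lset_C[OF n] closed_Cset] y by blast
  obtain e0 where yR: "y \<in> Rn n" and ye: "lev n y e0" using Cset_lev[OF yC] by blast
  have ly: "level n y" and ee: "eval_level n y = e0" using lev_imp[OF n ye] by auto
  obtain k0 k0' where k0: "k0 \<in> {1..n}" "k0' \<in> {1..n}" "odd k0" "even k0'" "y k0 = e0" "y k0' = e0"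
    using ye unfolding lev_def by blast
  have yod: "\<And>k. k \<in> {1..n} \<Longrightarrow> odd k \<Longrightarrow> e0 \<le> y k" and yev: "\<And>k. k \<in> {1..n} \<Longrightarrow> even k \<Longrightarrow> y k \<le> e0"
    using ye unfolding lev_def by auto
  define D where "D = {\<bar>y k - e0\<bar> | k. k \<in> {1..n} \<and> y k \<noteq> e0}"
  have finD: "finite D"
  proof (rule finite_subset)
    show "D \<subseteq> (\<lambda>k. \<bar>y k - e0\<bar>) ` {1..n}" unfolding D_def by auto
  qed simp
  define \<delta> where "\<delta> = (if D = {} then 1 else Min D)"
  have dpos: "\<delta> > 0"
  proof (cases "D = {}")
    case False
    then have "Min D \<in> D" using Min_in[OF finD] by blast
    then obtain k where "Min D = \<bar>y k - e0\<bar>" "y k \<noteq> e0" unfolding D_def by blast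
    then show ?thesis using False unfolding \<delta>_def by simp
  qed (simp add: \<delta>_def)
  have dle: "\<And>k. k \<in> {1..n} \<Longrightarrow> y k \<noteq> e0 \<Longrightarrow> \<delta> \<le> \<bar>y k - e0\<bar>"
  proof -
    fix k assume "k \<in> {1..n}" "y k \<noteq> e0"
    then have kD: "\<bar>y k - e0\<bar> \<in> D" unfolding D_def by blast
    then have "D \<noteq> {}" by blast
    then show "\<delta> \<le> \<bar>y k - e0\<bar>" unfolding \<delta>_def using Min_le[OF finD kD] by simp
  qed
  define N where "N = (\<Inter>k\<in>{1..n}. {x::nat\<Rightarrow>real. \<bar>x k - y k\<bar> < \<delta>/2})"
  have oN: "open N" unfolding N_def
    by (intro open_INT finite_atLeastAtMost ballI open_Collect_less continuous_on_rabs continuous_on_diff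
        continuous_on_product_coordinates continuous_on_const)
  have yN: "y \<in> N" unfolding N_def using dpos by simp
  have "N \<inter> closure (Lset n s m) \<noteq> {}" using yN y by blast
  then have "N \<inter> Lset n s m \<noteq> {}" using open_Int_closure_eq_empty[OF oN] by blast
  then obtain x where xN: "x \<in> N" and xL: "x \<in> Lset n s m" by blast
  have lx: "level n x" and otx: "of_type n s m x" using xL unfolding Lset_def by auto
  define ex where "ex = eval_level n x"
  have xe: "lev n x ex" using level_imp[OF n lx] unfolding ex_def .
  have xod: "\<And>k. k \<in> {1..n} \<Longrightarrow> odd k \<Longrightarrow> ex \<le> x k" and xev: "\<And>k. k \<in> {1..n} \<Longrightarrow> even k \<Longrightarrow> x k \<le> ex"
    using xe unfolding lev_def by auto
  have close: "\<And>k. k \<in> {1..n} \<Longrightarrow> \<bar>x k - y k\<bar> < \<delta>/2" using xN unfolding N_def by blast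
  have sub: "\<forall>k\<in>{1..n}. k \<in> {k. x k = ex} \<longrightarrow> k \<in> {k. y k = e0}"
  proof (intro ballI impI)
    fix k assume kn: "k \<in> {1..n}" and "k \<in> {k. x k = ex}"
    then have xk: "x k = ex" by simp
    show "k \<in> {k. y k = e0}"
    proof (rule ccontr)
      assume "k \<notin> {k. y k = e0}"
      then have ne: "y k \<noteq> e0" by simp
      have dk: "\<delta> \<le> \<bar>y k - e0\<bar>" using dle[OF kn ne] .
      show False
      proof (cases "odd k")
        case True
        have "e0 \<le> y k" using yod[OF kn True] .
        moreover have "\<bar>x k - y k\<bar> < \<delta>/2" "\<bar>x k0 - y k0\<bar> < \<delta>/2" using close[OF kn] close[OF k0(1)] .
        moreover have "ex \<le> x k0" using xod[OF k0(1) k0(3)] .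
        ultimately show False using dk xk k0(5) by (simp add: abs_if split: if_splits)
      next
        case False
        then have ev: "even k" by simp
        have "y k \<le> e0" using yev[OF kn ev] .
        moreover have "\<bar>x k - y k\<bar> < \<delta>/2" "\<bar>x k0' - y k0'\<bar> < \<delta>/2" using close[OF kn] close[OF k0(2)] .
        moreover have "x k0' \<le> ex" using xev[OF k0(2) k0(4)] .
        ultimately show False using dk xk k0(6) by (simp add: abs_if split: if_splits)
      qed
    qed
  qed
  have tx: "typeT n s m {k. x k = ex}" using otx unfolding of_type_typeT ex_def .
  have "{k. y k = e0} \<inter> {1..n} \<subseteq> {1..n}" "{k. y k = e0} \<inter> {1..n} \<noteq> {}" using k0 by auto
  from typeT_exists[OF this] obtain s' m' where s': "s' \<in> {1,-1}" and m': "m' \<ge> 1"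
    and ty0: "typeT n s' m' ({k. y k = e0} \<inter> {1..n})" by blast
  have ty: "typeT n s' m' {k. y k = e0}" using ty0 typeT_restrict by blast
  have oty: "of_type n s' m' y" unfolding of_type_typeT ee using ty .
  then have yL: "y \<in> Lset n s' m'" unfolding Lset_def using yR ly by simp
  from typeT_mono[OF tx ty sub m s] show ?thesis
  proof
    assume "m < m'" then show ?thesis using s' yL by blast
  next
    assume "m = m' \<and> s = s'" then show ?thesis using yL by blast
  qed
qed

lemma closure_sup:
  fixes n m m' :: nat and s s' :: int and y :: "nat \<Rightarrow> real"
  assumes n: "n \<ge> 2" and m: "m \<ge> 2" and s: "s \<in> {1,-1}" and s': "s' \<in> {1,-1}" and mm: "m < m'"
    and y: "y \<in> Lset n s' m'"
  shows "y \<in> closure (Lset n s m)"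
proof -
  have yR: "y \<in> Rn n" and ly: "level n y" and oty: "of_type n s' m' y" using y unfolding Lset_def by auto
  define e0 where "e0 = eval_level n y"
  have ye: "lev n y e0" using level_imp[OF n ly] unfolding e0_def .
  have yod: "\<And>k. k \<in> {1..n} \<Longrightarrow> odd k \<Longrightarrow> e0 \<le> y k" and yev: "\<And>k. k \<in> {1..n} \<Longrightarrow> even k \<Longrightarrow> y k \<le> e0"
    using ye unfolding lev_def by auto
  have ty: "typeT n s' m' {k. y k = e0}" using oty unfolding of_type_typeT e0_def .
  obtain T0 where T0: "T0 \<subseteq> {k. y k = e0} \<inter> {1..n}" and t0: "typeT n s m T0"
    using typeT_sub[OF ty s s' _ mm] m by auto
  obtain ka kb where ka: "ka \<in> T0 \<inter> {1..n}" "odd ka" and kb: "kb \<in> T0 \<inter> {1..n}" "even kb"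
    using typeT_two[OF t0 m s] by blast
  define d where "d k = (if k \<in> {1..n} \<and> k \<notin> T0 then (if odd k then 1 else -1) else (0::real))" for k
  define g where "g \<epsilon> = (\<lambda>k. y k + \<epsilon> * d k)" for \<epsilon> :: real
  have gL: "g \<epsilon> \<in> Lset n s m" if ep: "\<epsilon> > 0" for \<epsilon>
  proof -
    have gR: "g \<epsilon> \<in> Rn n" using yR unfolding Rn_def g_def d_def by auto
    have gT: "\<And>k. k \<in> T0 \<Longrightarrow> g \<epsilon> k = e0" using T0 unfolding g_def d_def by auto
    have gne: "\<And>k. k \<in> {1..n} \<Longrightarrow> k \<notin> T0 \<Longrightarrow> g \<epsilon> k \<noteq> e0"
    proof -
      fix k assume kn: "k \<in> {1..n}" and kT: "k \<notin> T0"
      show "g \<epsilon> k \<noteq> e0"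
      proof (cases "odd k")
        case True
        then show ?thesis using yod[OF kn True] ep kn kT unfolding g_def d_def by simp
      next
        case False
        then show ?thesis using yev[OF kn] ep kn kT unfolding g_def d_def by simp
      qed
    qed
    have gl: "lev n (g \<epsilon>) e0" unfolding lev_def
    proof (intro conjI ballI impI)
      show "\<exists>k\<in>{1..n}. \<exists>k'\<in>{1..n}. odd k \<and> even k' \<and> g \<epsilon> k = e0 \<and> g \<epsilon> k' = e0"
        using ka kb gT by blast
    next
      fix k assume kn: "k \<in> {1..n}" and od: "odd k"
      show "e0 \<le> g \<epsilon> k" using yod[OF kn od] ep od unfolding g_def d_def by simp
    next
      fix k assume kn: "k \<in> {1..n}" and ev: "even k"
      show "g \<epsilon> k \<le> e0" using yev[OF kn ev] ep ev unfolding g_def d_def by simp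
    qed
    have lg: "level n (g \<epsilon>)" and eg: "eval_level n (g \<epsilon>) = e0" using lev_imp[OF n gl] by auto
    have "{k. g \<epsilon> k = e0} \<inter> {1..n} = T0" using gT gne T0 by blast
    then have "typeT n s m ({k. g \<epsilon> k = e0} \<inter> {1..n})" using t0 by simp
    then have "typeT n s m {k. g \<epsilon> k = e0}" using typeT_restrict by blast
    then have "of_type n s m (g \<epsilon>)" unfolding of_type_typeT eg .
    then show ?thesis unfolding Lset_def using gR lg by simp
  qed
  have cont: "continuous_on (closure {0<..}) g"
    unfolding g_def by (intro continuous_on_coordinatewise_then_product continuous_intros)
  have "g ` {0<..} \<subseteq> closure (Lset n s m)" using gL closure_subset by fastforce
  then have "g ` closure {0<..} \<subseteq> closure (Lset n s m)"
    using image_closure_subset[OF cont closed_closure] by blast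
  moreover have "(0::real) \<in> closure {0<..}" by simp
  moreover have "g 0 = y" unfolding g_def by simp
  ultimately show ?thesis by blast
qed



lemma closure_eq:
  fixes n m :: nat and s :: int
  assumes n: "n \<ge> 2" and m: "m \<ge> 2" and s: "s \<in> {1, -1}"
  shows "closure (Lset n s m) = Lset n s m \<union> (\<Union>{Lset n s' m' | s' m'. s' \<in> {1, -1} \<and> m' > m})"
proof
  show "closure (Lset n s m) \<subseteq> Lset n s m \<union> (\<Union>{Lset n s' m' | s' m'. s' \<in> {1, -1} \<and> m' > m})"
  proof
    fix y assume "y \<in> closure (Lset n s m)"
    from closure_sub[OF n _ s this] m
    show "y \<in> Lset n s m \<union> (\<Union>{Lset n s' m' | s' m'. s' \<in> {1, -1} \<and> m' > m})" by auto
  qed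
  show "Lset n s m \<union> (\<Union>{Lset n s' m' | s' m'. s' \<in> {1, -1} \<and> m' > m}) \<subseteq> closure (Lset n s m)"
  proof
    fix y assume "y \<in> Lset n s m \<union> (\<Union>{Lset n s' m' | s' m'. s' \<in> {1, -1} \<and> m' > m})"
    then consider "y \<in> Lset n s m" | s' m' where "s' \<in> {1,-1}" "m' > m" "y \<in> Lset n s' m'" by blast
    then show "y \<in> closure (Lset n s m)"
    proof cases
      case 1 then show ?thesis using closure_subset by blast
    next
      case 2 then show ?thesis using closure_sup[OF n m s] by blast
    qed
  qed
qed

lemma Lset_disj:
  assumes m: "m \<ge> 1" shows "Lset n 1 m \<inter> Lset n (-1) m = {}"
proof (rule ccontr)
  assume "Lset n 1 m \<inter> Lset n (-1) m \<noteq> {}"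
  then obtain x where "of_type n 1 m x" "of_type n (-1) m x" unfolding Lset_def by blast
  then have t1: "typeT n 1 m {k. x k = eval_level n x}" and t2: "typeT n (-1) m {k. x k = eval_level n x}"
    unfolding of_type_typeT by auto
  have "m < m \<or> (m = m \<and> (1::int) = -1)" using typeT_mono[OF t1 t2 _ m] by simp
  then show False by simp
qed

theorem lemma1p10:
  fixes n m :: nat and s :: int
  assumes "n \<ge> 2" and "m \<ge> 2" and "s \<in> {1, -1}"
  shows "closure (Lset n s m) =
           Lset n s m \<union> (\<Union>{Lset n s' m' | s' m'. s' \<in> {1, -1} \<and> m' > m}) \<and>
         closure (Lset n 1 m) \<inter> closure (Lset n (-1) m) =
           (\<Union>{Lset n s' m' | s' m'. s' \<in> {1, -1} \<and> m' > m})"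
proof
  show "closure (Lset n s m) = Lset n s m \<union> (\<Union>{Lset n s' m' | s' m'. s' \<in> {1, -1} \<and> m' > m})"
    using closure_eq[OF assms] .
  have a: "closure (Lset n 1 m) = Lset n 1 m \<union> (\<Union>{Lset n s' m' | s' m'. s' \<in> {1, -1} \<and> m' > m})"
    using closure_eq[OF assms(1,2)] by simp
  have b: "closure (Lset n (-1) m) = Lset n (-1) m \<union> (\<Union>{Lset n s' m' | s' m'. s' \<in> {1, -1} \<and> m' > m})"
    using closure_eq[OF assms(1,2)] by simp
  have d: "Lset n 1 m \<inter> Lset n (-1) m = {}" using Lset_disj assms(2) by simp
  show "closure (Lset n 1 m) \<inter> closure (Lset n (-1) m) = (\<Union>{Lset n s' m' | s' m'. s' \<in> {1, -1} \<and> m' > m})"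
    unfolding a b using d by blast
qed


end
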